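(* Let $S$ be a commutative ring, fix $q\in S$, and put $[2]=1+q$. Let $X,Y\in\mathbb{M}_2(S)$ have determinants $\delta,\delta'$, traces $t,t'$, and $q$-traces $\tau=\operatorname{tr}_q(X)$, $\tau'=\operatorname{tr}_q(Y)$, and let $\sigma=\operatorname{tr}_q(XY)$, $\sigma'=\operatorname{tr}_q(YX)$. Then $$q\cdot\det\,[X,Y]=[2]^2\,\delta'\delta-[2]\,\big(\delta\,t'\tau'+\delta'\,t\,\tau\big)+\big(\delta\,\tau'^2+\delta'\tau^2+\operatorname{tr}(XY)\,\tau'\tau-\sigma'\sigma\big).$$
   Context: $[X,Y]=XY-YX$. For $M=(m_{ij})\in\mathbb{M}_2(S)$ and $q\in S$, the $q$-trace is $\operatorname{tr}_q(M)=m_{11}+q\,m_{22}$. *)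

theory Defs
  imports "HOL-Analysis.Analysis"
begin

definition commutator :: "'a::comm_ring_1^'n^'n \<Rightarrow> 'a^'n^'n \<Rightarrow> 'a^'n^'n" where
  "commutator X Y = X ** Y - Y ** X"

definition qtrace :: "'a::comm_ring_1 \<Rightarrow> 'a^2^2 \<Rightarrow> 'a" where
  "qtrace q M = M $ 1 $ 1 + q * M $ 2 $ 2"

end

theory Submission
  imports Defs
begin

theorem theorem4p1:
  fixes q :: "'a::comm_ring_1" and X Y :: "'a^2^2"
  shows "q * det (commutator X Y) =
     (1 + q)^2 * det Y * det X
     - (1 + q) * (det X * trace Y * qtrace q Y + det Y * trace X * qtrace q X)
     + (det X * (qtrace q Y)^2 + det Y * (qtrace q X)^2
        + trace (X ** Y) * qtrace q Y * qtrace q X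
        - qtrace q (Y ** X) * qtrace q (X ** Y))"
  by (simp add: det_2 trace_def commutator_def qtrace_def matrix_matrix_mult_def sum_2 power2_eq_square algebra_simps)

end
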